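(* A graph $G$ has exactly one Grundy dominating set (i.e., is a unique Grundy domination graph) if and only if $G$ has no edges.
   Context: For a graph $G$, $N[v]$ denotes the closed neighborhood of $v$ (the vertex together with its neighbors). A sequence $(v_1,\ldots,v_k)$ of distinct vertices is a closed neighborhood sequence if $N[v_i]\setminus\bigcup_{j=1}^{i-1}N[v_j]\neq\emptyset$ for each $i\in[k]$. The Grundy domination number $\gamma_{gr}(G)$ is the maximum length of a closed neighborhood sequence; the set of vertices of such a maximum-length sequence is a Grundy dominating set. *)

theory Defs
  imports Main
begin

definition simple_graph :: "'a set \<Rightarrow> ('a \<Rightarrow> 'a \<Rightarrow> bool) \<Rightarrow> bool" where
  "simple_graph V E \<longleftrightarrow> finite V \<and> (\<forall>u v. E u v \<longrightarrow> u \<in> V \<and> v \<in> V)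
     \<and> (\<forall>u v. E u v \<longrightarrow> E v u) \<and> (\<forall>v. \<not> E v v)"

definition closed_nbh :: "'a set \<Rightarrow> ('a \<Rightarrow> 'a \<Rightarrow> bool) \<Rightarrow> 'a \<Rightarrow> 'a set" where
  "closed_nbh V E v = insert v {u \<in> V. E v u}"

definition closed_nbh_seq :: "'a set \<Rightarrow> ('a \<Rightarrow> 'a \<Rightarrow> bool) \<Rightarrow> 'a list \<Rightarrow> bool" where
  "closed_nbh_seq V E xs \<longleftrightarrow> distinct xs \<and> set xs \<subseteq> V \<and>
     (\<forall>i < length xs. closed_nbh V E (xs ! i) - (\<Union>j<i. closed_nbh V E (xs ! j)) \<noteq> {})"

definition grundy_dom_num :: "'a set \<Rightarrow> ('a \<Rightarrow> 'a \<Rightarrow> bool) \<Rightarrow> nat" where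
  "grundy_dom_num V E = Max {length xs | xs. closed_nbh_seq V E xs}"

definition grundy_dom_set :: "'a set \<Rightarrow> ('a \<Rightarrow> 'a \<Rightarrow> bool) \<Rightarrow> 'a set \<Rightarrow> bool" where
  "grundy_dom_set V E S \<longleftrightarrow> (\<exists>xs. closed_nbh_seq V E xs \<and>
     length xs = grundy_dom_num V E \<and> set xs = S)"

end

theory Submission
  imports Defs
begin

lemma seq_len_le:
  assumes "finite V" "closed_nbh_seq V E xs"
  shows "length xs \<le> card V"
proof -
  have "distinct xs" "set xs \<subseteq> V" using assms(2) unfolding closed_nbh_seq_def by auto
  thus ?thesis using assms(1) by (metis card_mono distinct_card)
qed

lemma lens_fin:
  assumes "finite V"
  shows "finite {length xs | xs. closed_nbh_seq V E xs}"
  by (rule finite_subset[of _ "{..card V}"]) (auto dest: seq_len_le[OF assms])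

lemma nil_seq: "closed_nbh_seq V E []"
  unfolding closed_nbh_seq_def by auto

lemma le_gdn:
  assumes "finite V" "closed_nbh_seq V E xs"
  shows "length xs \<le> grundy_dom_num V E"
  unfolding grundy_dom_num_def using lens_fin[OF assms(1)] assms(2)
  by (intro Max_ge) auto

lemma gdn_ex:
  assumes "finite V"
  shows "\<exists>xs. closed_nbh_seq V E xs \<and> length xs = grundy_dom_num V E"
proof -
  have "grundy_dom_num V E \<in> {length xs | xs. closed_nbh_seq V E xs}"
    unfolding grundy_dom_num_def using lens_fin[OF assms(1)] nil_seq
    by (intro Max_in) auto
  thus ?thesis by auto
qed

lemma self_in: "v \<in> closed_nbh V E v"
  unfolding closed_nbh_def by auto

lemma append_seq:
  assumes "closed_nbh_seq V E xs" "w \<in> V" "w \<notin> (\<Union>s\<in>set xs. closed_nbh V E s)"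
  shows "closed_nbh_seq V E (xs @ [w])"
proof -
  have wn: "w \<notin> set xs" using assms(3) self_in by fastforce
  have "(\<Union>j<length xs. closed_nbh V E (xs ! j)) = (\<Union>s\<in>set xs. closed_nbh V E s)"
    by (auto simp: in_set_conv_nth) (use nth_mem in blast)
  then have "w \<in> closed_nbh V E ((xs@[w]) ! length xs) - (\<Union>j<length xs. closed_nbh V E ((xs@[w]) ! j))"
    using assms(3) self_in by (auto simp: nth_append)
  then show ?thesis using assms(1,2) wn unfolding closed_nbh_seq_def
    apply (auto simp: nth_append less_Suc_eq)
    done
qed

lemma iso_foot:
  assumes "simple_graph V E" "distinct ys" "j < length ys" "\<forall>u. \<not> E (ys ! j) u"
  shows "closed_nbh V E (ys ! j) - (\<Union>j'<j. closed_nbh V E (ys ! j')) \<noteq> {}"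
proof -
  have "ys ! j \<notin> closed_nbh V E (ys ! j')" if "j' < j" for j'
  proof
    assume "ys ! j \<in> closed_nbh V E (ys ! j')"
    moreover have "ys ! j' \<noteq> ys ! j" using assms(2,3) that by (simp add: nth_eq_iff_index_eq)
    ultimately have "E (ys ! j') (ys ! j)" unfolding closed_nbh_def by auto
    thus False using assms(1,4) unfolding simple_graph_def by blast
  qed
  hence "ys ! j \<notin> (\<Union>j'<j. closed_nbh V E (ys ! j'))" by blast
  hence "ys ! j \<in> closed_nbh V E (ys ! j) - (\<Union>j'<j. closed_nbh V E (ys ! j'))"
    using self_in[of "ys ! j" V E] by blast
  thus ?thesis by blast
qed

theorem corollary4p3:
  fixes V :: "'a set" and E :: "'a \<Rightarrow> 'a \<Rightarrow> bool"
  assumes "simple_graph V E"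
  shows "(\<exists>!S. grundy_dom_set V E S) \<longleftrightarrow> (\<forall>u v. \<not> E u v)"
proof
  have fin: "finite V" using assms unfolding simple_graph_def by auto
  have sym: "\<And>a b. E a b \<Longrightarrow> E b a" and inV: "\<And>a b. E a b \<Longrightarrow> a \<in> V \<and> b \<in> V"
    using assms unfolding simple_graph_def by auto
  assume uniq: "\<exists>!S. grundy_dom_set V E S"
  show "\<forall>u v. \<not> E u v"
  proof (rule ccontr)
    assume "\<not> (\<forall>u v. \<not> E u v)"
    then obtain u v where uv: "E u v" by blast
    obtain xs where xs: "closed_nbh_seq V E xs" "length xs = grundy_dom_num V E"
      using gdn_ex[OF fin] by blast
    have dxs: "distinct xs" and sxs: "set xs \<subseteq> V" using xs(1) unfolding closed_nbh_seq_def by auto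
    have dom: "w \<in> (\<Union>s\<in>set xs. closed_nbh V E s)" if "w \<in> V" for w
    proof (rule ccontr)
      assume "w \<notin> (\<Union>s\<in>set xs. closed_nbh V E s)"
      from le_gdn[OF fin append_seq[OF xs(1) that this]] xs(2) show False by simp
    qed
    obtain s where s: "s \<in> set xs" "u \<in> closed_nbh V E s" using dom inV[OF uv] by blast
    have "\<not> (\<forall>w. \<not> E s w)"
    proof (cases "s = u")
      case True then show ?thesis using uv by auto
    next
      case False then show ?thesis using s(2) unfolding closed_nbh_def by auto
    qed
    then obtain i0 where i0: "i0 < length xs" "\<not> (\<forall>w. \<not> E (xs ! i0) w)"
      using s(1) by (metis in_set_conv_nth)
    define I where "I = {i. i < length xs \<and> \<not> (\<forall>w. \<not> E (xs ! i) w)}"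
    define i where "i = Max I"
    have finI: "finite I" unfolding I_def by auto
    have "i \<in> I" unfolding i_def using finI i0 by (intro Max_in) (auto simp: I_def)
    hence il: "i < length xs" and ini: "\<not> (\<forall>w. \<not> E (xs ! i) w)" unfolding I_def by auto
    have after: "\<forall>w. \<not> E (xs ! j) w" if "i < j" "j < length xs" for j
    proof (rule ccontr)
      assume "\<not> (\<forall>w. \<not> E (xs ! j) w)"
      hence "j \<in> I" using that unfolding I_def by auto
      hence "j \<le> i" unfolding i_def using finI by auto
      thus False using that by simp
    qed
    obtain x where x: "x \<in> closed_nbh V E (xs ! i)" "x \<notin> (\<Union>j<i. closed_nbh V E (xs ! j))"
      using xs(1) il unfolding closed_nbh_seq_def by blast
    obtain y where y: "y \<noteq> xs ! i" "x \<in> closed_nbh V E y" "\<not> (\<forall>w. \<not> E y w)"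
    proof (cases "x = xs ! i")
      case True
      then obtain z where "E (xs ! i) z" using ini by auto
      moreover have "z \<noteq> xs ! i" using calculation assms unfolding simple_graph_def by auto
      moreover have "x \<in> closed_nbh V E z" using calculation True sym inV unfolding closed_nbh_def by auto
      moreover have "E z x" using calculation True sym by auto
      ultimately show ?thesis using that[of z] by blast
    next
      case False
      then have "E (xs ! i) x" using x(1) unfolding closed_nbh_def by auto
      then have "E x (xs ! i)" by (rule sym)
      then show ?thesis using that[of x] False self_in[of x V E] by blast
    qed
    have yV: "y \<in> V" using y(3) inV by blast
    have niy: "\<not> (\<forall>w. \<not> E y w)" using y(3) by blast
    have ynot: "y \<notin> set xs"
    proof
      assume "y \<in> set xs"
      then obtain j where j: "j < length xs" "xs ! j = y" by (metis in_set_conv_nth)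
      consider "j < i" | "j = i" | "i < j" by linarith
      then show False
      proof cases
        case 1 then show False using x(2) y(2) j by auto
      next
        case 2 then show False using y(1) j by auto
      next
        case 3 then show False using after[OF 3 j(1)] niy j by auto
      qed
    qed
    define ys where "ys = xs[i := y]"
    have lys: "length ys = length xs" unfolding ys_def by simp
    have dys: "distinct ys" unfolding ys_def using dxs ynot by (simp add: distinct_list_update)
    have sys: "set ys \<subseteq> V" unfolding ys_def using sxs yV
      using set_update_subset_insert[of xs i y] by blast
    have foot: "closed_nbh V E (ys ! j) - (\<Union>j'<j. closed_nbh V E (ys ! j')) \<noteq> {}"
      if j: "j < length ys" for j
    proof -
      consider "j < i" | "j = i" | "i < j" by linarith
      then show ?thesis
      proof cases
        case 1
        have "ys ! j = xs ! j" "\<forall>j'<j. ys ! j' = xs ! j'" using 1 unfolding ys_def by auto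
        then show ?thesis using xs(1) j lys unfolding closed_nbh_seq_def by simp
      next
        case 2
        have "ys ! j = y" "\<forall>j'<j. ys ! j' = xs ! j'" using 2 il unfolding ys_def by auto
        then show ?thesis using x(2) y(2) 2 by auto
      next
        case 3
        have "ys ! j = xs ! j" using 3 unfolding ys_def by auto
        then show ?thesis using iso_foot[OF assms dys j] after[OF 3] j lys by simp
      qed
    qed
    have ys: "closed_nbh_seq V E ys" unfolding closed_nbh_seq_def using dys sys foot by blast
    have g1: "grundy_dom_set V E (set xs)" unfolding grundy_dom_set_def using xs by blast
    have g2: "grundy_dom_set V E (set ys)" unfolding grundy_dom_set_def using ys lys xs(2) by (intro exI[of _ ys]) simp
    have "y \<in> set ys" unfolding ys_def using il by (simp add: set_update_memI)
    hence "set xs \<noteq> set ys" using ynot by blast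
    thus False using uniq g1 g2 by blast
  qed
next
  have fin: "finite V" using assms unfolding simple_graph_def by auto
  assume noe: "\<forall>u v. \<not> E u v"
  have N: "closed_nbh V E w = {w}" for w unfolding closed_nbh_def using noe by auto
  obtain vs where vs: "set vs = V" "distinct vs" using finite_distinct_list[OF fin] by blast
  have vseq: "closed_nbh_seq V E vs" unfolding closed_nbh_seq_def using vs
    by (auto simp: N nth_eq_iff_index_eq)
  have lv: "length vs = card V" using vs by (metis distinct_card)
  obtain xs0 where xs0: "closed_nbh_seq V E xs0" "length xs0 = grundy_dom_num V E"
    using gdn_ex[OF fin] by blast
  have gd: "grundy_dom_num V E = card V"
    using le_gdn[OF fin vseq] lv seq_len_le[OF fin xs0(1)] xs0(2) by linarith
  have "S = V" if gS: "grundy_dom_set V E S" for S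
  proof -
    obtain xs where xs: "closed_nbh_seq V E xs" "length xs = card V" "set xs = S"
      using gS unfolding grundy_dom_set_def gd by blast
    have "distinct xs" "set xs \<subseteq> V" using xs(1) unfolding closed_nbh_seq_def by auto
    hence "card (set xs) = card V" using xs(2) by (simp add: distinct_card)
    thus ?thesis using xs(3) fin \<open>set xs \<subseteq> V\<close> card_subset_eq by blast
  qed
  moreover have "grundy_dom_set V E V" unfolding grundy_dom_set_def using vseq lv gd vs by auto
  ultimately show "\<exists>!S. grundy_dom_set V E S" by blast
qed

end
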